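(* Let $G$ be a simple undirected graph with exactly three leaves. (1) If $G$ admits a taming net, then $G$ has no sapling. (2) If an $X$-net $\mathbb{H}$ of $G$ has no parallel arcs, then every $\mathbb{H}$-tamed subset of $X$ is $\mathbb{H}$-local.
   Context: A sapling of $G$ is an induced tree of $G$ containing all three leaves of $G$. For $U,V\subseteq V(G)$, a $UV$-path is a single vertex of $U\cap V$ or a path with one end in $U$ and the other in $V$; a $UV$-rung is a vertex-minimal induced $UV$-path. $\nabla(\mathbb{H})$ adds an edge between every two leaves of $\mathbb{H}$. An $X$-net ($X\subseteq V(G)$) is a finite loopless multigraph $\mathbb{H}$ whose nodes and arcs are subsets of $X$ such that: (N1) $\mathbb{H}$ is connected and $\nabla(\mathbb{H})$ biconnected; (N2) the arcs are nonempty, pairwise disjoint, and partition $X$; (N3) $\mathbb{H}$ has exactly three leaf nodes, each a single leaf vertex of $G$; (N4) for each arc $E$ with end-nodes $U,V$, each vertex of $E$ lies on a $UV$-rung of $G[E]$; (N5) for arc $E$ and node $V$, $E\cap V\ne\emptyset$ iff $V$ is an end-node of $E$; (N6) for $u,v\in X$ in distinct arcs $E,F$, $uv\in E(G)$ iff $E,F$ share an end-node $V$ with $\{u,v\}\subseteq V$. A net is an $X$-net for some $X$. For an $X$-net $\mathbb{H}$: $S\subseteq X$ is $\mathbb{H}$-tamed if every two vertices of $S$ lie in a common arc or a common node; $Y\subseteq V(G)\setminus X$ is $\mathbb{H}$-tamed if the set of vertices of $X$ adjacent to $Y$ is $\mathbb{H}$-tamed; $\mathbb{H}$ is taming if every $Y\subseteq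 V(G)\setminus X$ with $G[Y]$ connected is $\mathbb{H}$-tamed. A triad is $(V_1\cap V_2)\cup(V_2\cap V_3)\cup(V_3\cap V_1)$ for nodes $V_1,V_2,V_3$ forming a triangle in $\mathbb{H}$; $S\subseteq X$ is $\mathbb{H}$-local if $S$ is contained in a node, an arc, or a triad of $\mathbb{H}$. *)

theory Defs
  imports Main
begin

definition simple_graph :: "'a set \<Rightarrow> ('a \<Rightarrow> 'a \<Rightarrow> bool) \<Rightarrow> bool" where
  "simple_graph VG adj \<longleftrightarrow> finite VG \<and>
     (\<forall>u v. adj u v \<longrightarrow> u \<in> VG \<and> v \<in> VG) \<and>
     (\<forall>u v. adj u v \<longrightarrow> adj v u) \<and> (\<forall>v. \<not> adj v v)"

definition degree :: "'a set \<Rightarrow> ('a \<Rightarrow> 'a \<Rightarrow> bool) \<Rightarrow> 'a \<Rightarrow> nat" where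
  "degree VG adj v = card {u \<in> VG. adj v u}"

definition leaves :: "'a set \<Rightarrow> ('a \<Rightarrow> 'a \<Rightarrow> bool) \<Rightarrow> 'a set" where
  "leaves VG adj = {v \<in> VG. degree VG adj v = 1}"

definition connected_on :: "('b \<Rightarrow> 'b \<Rightarrow> bool) \<Rightarrow> 'b set \<Rightarrow> bool" where
  "connected_on R S \<longleftrightarrow>
     (\<forall>u\<in>S. \<forall>v\<in>S. (u, v) \<in> {(x, y). x \<in> S \<and> y \<in> S \<and> R x y}\<^sup>*)"

definition is_path :: "'a set \<Rightarrow> ('a \<Rightarrow> 'a \<Rightarrow> bool) \<Rightarrow> 'a list \<Rightarrow> bool" where
  "is_path VG adj P \<longleftrightarrow> P \<noteq> [] \<and> distinct P \<and> set P \<subseteq> VG \<and>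
     (\<forall>i. Suc i < length P \<longrightarrow> adj (P ! i) (P ! Suc i))"

definition induced_path :: "'a set \<Rightarrow> ('a \<Rightarrow> 'a \<Rightarrow> bool) \<Rightarrow> 'a list \<Rightarrow> bool" where
  "induced_path VG adj P \<longleftrightarrow> is_path VG adj P \<and>
     (\<forall>i j. i < length P \<longrightarrow> j < length P \<longrightarrow> Suc i < j \<longrightarrow> \<not> adj (P ! i) (P ! j))"

definition is_cycle :: "'a set \<Rightarrow> ('a \<Rightarrow> 'a \<Rightarrow> bool) \<Rightarrow> 'a list \<Rightarrow> bool" where
  "is_cycle VG adj C \<longleftrightarrow> is_path VG adj C \<and> length C \<ge> 3 \<and> adj (last C) (hd C)"

definition induced_tree :: "'a set \<Rightarrow> ('a \<Rightarrow> 'a \<Rightarrow> bool) \<Rightarrow> 'a set \<Rightarrow> bool" where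
  "induced_tree VG adj T \<longleftrightarrow> T \<subseteq> VG \<and> T \<noteq> {} \<and> connected_on adj T \<and>
     \<not> (\<exists>C. set C \<subseteq> T \<and> is_cycle VG adj C)"

definition sapling :: "'a set \<Rightarrow> ('a \<Rightarrow> 'a \<Rightarrow> bool) \<Rightarrow> 'a set \<Rightarrow> bool" where
  "sapling VG adj T \<longleftrightarrow> induced_tree VG adj T \<and> leaves VG adj \<subseteq> T"

text \<open>A UV-path of G[W]: a single vertex of U \<inter> V, or a path with one end in U, the other in V,
  all of whose vertices lie in W.\<close>

definition UV_path :: "'a set \<Rightarrow> ('a \<Rightarrow> 'a \<Rightarrow> bool) \<Rightarrow> 'a set \<Rightarrow> 'a set \<Rightarrow> 'a set \<Rightarrow> 'a list \<Rightarrow> bool" where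
  "UV_path VG adj W U V P \<longleftrightarrow> is_path VG adj P \<and> set P \<subseteq> W \<and>
     ((hd P \<in> U \<and> last P \<in> V) \<or> (hd P \<in> V \<and> last P \<in> U))"

definition UV_rung :: "'a set \<Rightarrow> ('a \<Rightarrow> 'a \<Rightarrow> bool) \<Rightarrow> 'a set \<Rightarrow> 'a set \<Rightarrow> 'a set \<Rightarrow> 'a list \<Rightarrow> bool" where
  "UV_rung VG adj W U V P \<longleftrightarrow> UV_path VG adj W U V P \<and> induced_path VG adj P \<and>
     \<not> (\<exists>Q. UV_path VG adj W U V Q \<and> set Q \<subset> set P)"

text \<open>A multigraph \<open>\<bbbH>\<close> is given by a set of nodes N, a set of arcs A (both sets of vertex sets
  of G) and an end-node map ends assigning to each arc the set of its end-nodes (two distinct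
  nodes, as the multigraph is loopless).\<close>

definition node_adj :: "'a set set \<Rightarrow> ('a set \<Rightarrow> 'a set set) \<Rightarrow> 'a set \<Rightarrow> 'a set \<Rightarrow> bool" where
  "node_adj A ends U V \<longleftrightarrow> U \<noteq> V \<and> (\<exists>E\<in>A. ends E = {U, V})"

definition node_degree :: "'a set set \<Rightarrow> ('a set \<Rightarrow> 'a set set) \<Rightarrow> 'a set \<Rightarrow> nat" where
  "node_degree A ends V = card {E \<in> A. V \<in> ends E}"

definition leaf_nodes :: "'a set set \<Rightarrow> 'a set set \<Rightarrow> ('a set \<Rightarrow> 'a set set) \<Rightarrow> 'a set set" where
  "leaf_nodes N A ends = {V \<in> N. node_degree A ends V = 1}"

definition nabla_adj :: "'a set set \<Rightarrow> 'a set set \<Rightarrow> ('a set \<Rightarrow> 'a set set) \<Rightarrow> 'a set \<Rightarrow> 'a set \<Rightarrow> bool" where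
  "nabla_adj N A ends U V \<longleftrightarrow> node_adj A ends U V \<or>
     (U \<noteq> V \<and> U \<in> leaf_nodes N A ends \<and> V \<in> leaf_nodes N A ends)"

definition biconnected_on :: "('b \<Rightarrow> 'b \<Rightarrow> bool) \<Rightarrow> 'b set \<Rightarrow> bool" where
  "biconnected_on R S \<longleftrightarrow> card S \<ge> 3 \<and> connected_on R S \<and>
     (\<forall>v\<in>S. connected_on R (S - {v}))"

definition is_net :: "'a set \<Rightarrow> ('a \<Rightarrow> 'a \<Rightarrow> bool) \<Rightarrow> 'a set \<Rightarrow> 'a set set \<Rightarrow> 'a set set
                       \<Rightarrow> ('a set \<Rightarrow> 'a set set) \<Rightarrow> bool" where
  "is_net VG adj X N A ends \<longleftrightarrow>
     X \<subseteq> VG \<and> finite N \<and> finite A \<and>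
     (\<forall>V\<in>N. V \<subseteq> X) \<and> (\<forall>E\<in>A. E \<subseteq> X) \<and>
     (\<forall>E\<in>A. ends E \<subseteq> N \<and> card (ends E) = 2) \<and>
     \<comment> \<open>(N1)\<close>
     connected_on (node_adj A ends) N \<and> biconnected_on (nabla_adj N A ends) N \<and>
     \<comment> \<open>(N2)\<close>
     (\<forall>E\<in>A. E \<noteq> {}) \<and> (\<forall>E\<in>A. \<forall>F\<in>A. E \<noteq> F \<longrightarrow> E \<inter> F = {}) \<and> \<Union>A = X \<and>
     \<comment> \<open>(N3)\<close>
     card (leaf_nodes N A ends) = 3 \<and>
     (\<forall>V\<in>leaf_nodes N A ends. \<exists>l\<in>leaves VG adj. V = {l}) \<and>
     \<comment> \<open>(N4)\<close>
     (\<forall>E\<in>A. \<forall>U V. ends E = {U, V} \<longrightarrow>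
        (\<forall>x\<in>E. \<exists>P. UV_rung VG adj E U V P \<and> x \<in> set P)) \<and>
     \<comment> \<open>(N5)\<close>
     (\<forall>E\<in>A. \<forall>V\<in>N. E \<inter> V \<noteq> {} \<longleftrightarrow> V \<in> ends E) \<and>
     \<comment> \<open>(N6)\<close>
     (\<forall>E\<in>A. \<forall>F\<in>A. E \<noteq> F \<longrightarrow> (\<forall>u\<in>E. \<forall>v\<in>F.
        adj u v \<longleftrightarrow> (\<exists>V\<in>N. V \<in> ends E \<and> V \<in> ends F \<and> u \<in> V \<and> v \<in> V)))"

definition no_parallel_arcs :: "'a set set \<Rightarrow> ('a set \<Rightarrow> 'a set set) \<Rightarrow> bool" where
  "no_parallel_arcs A ends \<longleftrightarrow> (\<forall>E\<in>A. \<forall>F\<in>A. E \<noteq> F \<longrightarrow> ends E \<noteq> ends F)"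

definition tamed_set :: "'a set set \<Rightarrow> 'a set set \<Rightarrow> 'a set \<Rightarrow> bool" where
  "tamed_set N A S \<longleftrightarrow>
     (\<forall>u\<in>S. \<forall>v\<in>S. (\<exists>E\<in>A. u \<in> E \<and> v \<in> E) \<or> (\<exists>V\<in>N. u \<in> V \<and> v \<in> V))"

definition tamed_outside :: "('a \<Rightarrow> 'a \<Rightarrow> bool) \<Rightarrow> 'a set \<Rightarrow> 'a set set \<Rightarrow> 'a set set \<Rightarrow> 'a set \<Rightarrow> bool" where
  "tamed_outside adj X N A Y \<longleftrightarrow> tamed_set N A {x \<in> X. \<exists>y\<in>Y. adj x y}"

definition taming :: "'a set \<Rightarrow> ('a \<Rightarrow> 'a \<Rightarrow> bool) \<Rightarrow> 'a set \<Rightarrow> 'a set set \<Rightarrow> 'a set set \<Rightarrow> bool" where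
  "taming VG adj X N A \<longleftrightarrow>
     (\<forall>Y. Y \<subseteq> VG - X \<longrightarrow> connected_on adj Y \<longrightarrow> tamed_outside adj X N A Y)"

definition triad :: "'a set set \<Rightarrow> 'a set set \<Rightarrow> ('a set \<Rightarrow> 'a set set) \<Rightarrow> 'a set \<Rightarrow> bool" where
  "triad N A ends T \<longleftrightarrow> (\<exists>V1\<in>N. \<exists>V2\<in>N. \<exists>V3\<in>N.
     node_adj A ends V1 V2 \<and> node_adj A ends V2 V3 \<and> node_adj A ends V3 V1 \<and>
     T = (V1 \<inter> V2) \<union> (V2 \<inter> V3) \<union> (V3 \<inter> V1))"

definition local_set :: "'a set set \<Rightarrow> 'a set set \<Rightarrow> ('a set \<Rightarrow> 'a set set) \<Rightarrow> 'a set \<Rightarrow> bool" where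
  "local_set N A ends S \<longleftrightarrow> (\<exists>V\<in>N. S \<subseteq> V) \<or> (\<exists>E\<in>A. S \<subseteq> E) \<or>
     (\<exists>T. triad N A ends T \<and> S \<subseteq> T)"

end

theory Submission
  imports Defs
begin


lemma rtrancl_distinct_path:
  assumes "(x,y) \<in> r\<^sup>*"
  shows "\<exists>p. p \<noteq> [] \<and> hd p = x \<and> last p = y \<and> distinct p \<and> (\<forall>i. Suc i < length p \<longrightarrow> (p!i, p!Suc i) \<in> r)"
  using assms
proof (induction rule: rtrancl_induct)
  case base then show ?case by (intro exI[of _ "[x]"]) auto
next
  case (step y z)
  then obtain p where p: "p \<noteq> []" "hd p = x" "last p = y" "distinct p"
    "\<forall>i. Suc i < length p \<longrightarrow> (p!i, p!Suc i) \<in> r" by blast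
  show ?case
  proof (cases "z \<in> set p")
    case True
    then obtain k where k: "k < length p" "p!k = z" by (auto simp: in_set_conv_nth)
    let ?q = "take (Suc k) p"
    have "?q \<noteq> []" using p(1) by simp
    moreover have "hd ?q = x" using p(1,2) by simp
    moreover have "last ?q = z" using k by (simp add: take_Suc_conv_app_nth)
    moreover have "distinct ?q" using p(4) by simp
    moreover have "\<forall>i. Suc i < length ?q \<longrightarrow> (?q!i, ?q!Suc i) \<in> r" using p(5) k by auto
    ultimately show ?thesis by blast
  next
    case False
    let ?q = "p @ [z]"
    have "?q \<noteq> []" by simp
    moreover have "hd ?q = x" using p(1,2) by simp
    moreover have "last ?q = z" by simp
    moreover have "distinct ?q" using p(4) False by simp
    moreover have "\<forall>i. Suc i < length ?q \<longrightarrow> (?q!i, ?q!Suc i) \<in> r"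
    proof (intro allI impI)
      fix i assume i: "Suc i < length ?q"
      show "(?q!i, ?q!Suc i) \<in> r"
      proof (cases "Suc i < length p")
        case True then show ?thesis using p(5) by (simp add: nth_append)
      next
        case False
        then have "i = length p - 1" "Suc i = length p" using i by auto
        then show ?thesis using p(1,3) step(2) by (simp add: nth_append last_conv_nth)
      qed
    qed
    ultimately show ?thesis by blast
  qed
qed

lemma deg2_no_three_ends:
  fixes R :: "'b \<Rightarrow> 'b \<Rightarrow> bool"
  assumes sym: "\<And>u v. R u v \<Longrightarrow> R v u"
    and deg2: "\<And>v a b c. R v a \<Longrightarrow> R v b \<Longrightarrow> R v c \<Longrightarrow> a = b \<or> b = c \<or> a = c"
    and d1: "\<And>a b. R x1 a \<Longrightarrow> R x1 b \<Longrightarrow> a = b"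
    and d2: "\<And>a b. R x2 a \<Longrightarrow> R x2 b \<Longrightarrow> a = b"
    and d3: "\<And>a b. R x3 a \<Longrightarrow> R x3 b \<Longrightarrow> a = b"
    and dist: "x1 \<noteq> x2" "x1 \<noteq> x3" "x2 \<noteq> x3"
    and c2: "(x1,x2) \<in> {(a,b). R a b}\<^sup>*" and c3: "(x1,x3) \<in> {(a,b). R a b}\<^sup>*"
  shows False
proof -
  obtain p where p: "p \<noteq> []" "hd p = x1" "last p = x2" "distinct p"
    "\<forall>i. Suc i < length p \<longrightarrow> (p!i, p!Suc i) \<in> {(a,b). R a b}"
    using rtrancl_distinct_path[OF c2] by blast
  define n where "n = length p"
  have n2: "n \<ge> 2"
  proof (rule ccontr)
    assume "\<not> n \<ge> 2"
    then have "length p = 1" using p(1) n_def by (cases p) (auto simp: Suc_le_eq)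
    then obtain a where "p = [a]" by (cases p) auto
    then show False using p dist by simp
  qed
  have hd: "p!0 = x1" using p(1,2) by (simp add: hd_conv_nth)
  have lst: "p!(n-1) = x2" using p(1,3) n_def by (simp add: last_conv_nth)
  have edge: "\<And>i. Suc i < n \<Longrightarrow> R (p!i) (p!Suc i)" using p(5) n_def by auto
  have dst: "\<And>i j. i < n \<Longrightarrow> j < n \<Longrightarrow> p!i = p!j \<Longrightarrow> i = j"
    using p(4) n_def by (simp add: nth_eq_iff_index_eq)
  have closed: "w \<in> set p" if vw: "v \<in> set p" "R v w" for v w
  proof -
    obtain i where i: "i < n" "p!i = v" using vw(1) n_def by (auto simp: in_set_conv_nth)
    consider "i = 0" | "i \<noteq> 0 \<and> i = n - 1" | "0 < i \<and> i < n - 1" using i by linarith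
    then show ?thesis
    proof cases
      case 1
      have "R x1 (p!1)" using edge[of 0] n2 hd by simp
      moreover have "R x1 w" using vw(2) i 1 hd by simp
      ultimately have "w = p!1" using d1 by blast
      then show ?thesis using n2 n_def by simp
    next
      case 2
      have "R (p!(n-2)) (p!(n-1))" using edge[of "n-2"] n2 by (simp add: Suc_diff_Suc numeral_2_eq_2)
      then have "R x2 (p!(n-2))" using sym lst by simp
      moreover have "R x2 w" using vw(2) i 2 lst by simp
      ultimately have "w = p!(n-2)" using d2 by blast
      then show ?thesis using n2 n_def by simp
    next
      case 3
      have si: "Suc i < n" "Suc (i-1) = i" using 3 by arith+
      have a: "R v (p!Suc i)" using edge[OF si(1)] i by simp
      have "R (p!(i-1)) (p!i)" using edge[of "i-1"] si by simp
      then have b: "R v (p!(i-1))" using sym i by simp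
      have lt: "i - 1 < n" "i - 1 \<noteq> Suc i" using si by arith+
      have "p!(i-1) \<noteq> p!Suc i" using dst[OF lt(1) si(1)] lt(2) by blast
      then have "w = p!Suc i \<or> w = p!(i-1)" using deg2[OF b a vw(2)] by blast
      then show ?thesis using lt si n_def nth_mem by metis
    qed
  qed
  have "y \<in> set p" if "(x1, y) \<in> {(a,b). R a b}\<^sup>*" for y
    using that
  proof (induction rule: rtrancl_induct)
    case base then show ?case using hd n2 n_def by (metis nth_mem p(1) length_greater_0_conv)
  next
    case (step y z) then show ?case using closed by auto
  qed
  from this[OF c3] obtain i where i: "i < n" "p!i = x3" using n_def by (auto simp: in_set_conv_nth)
  have "i \<noteq> 0" using i hd dist by metis
  moreover have "i \<noteq> n - 1" using i lst dist by metis
  ultimately have "0 < i" "Suc i < n" using i by auto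
  have a: "R x3 (p!Suc i)" using edge[of i] \<open>Suc i < n\<close> i by simp
  have "R (p!(i-1)) (p!i)" using edge[of "i-1"] \<open>0 < i\<close> \<open>Suc i < n\<close> by simp
  then have b: "R x3 (p!(i-1))" using sym i by simp
  have lt: "i - 1 < n" "i - 1 \<noteq> Suc i" using \<open>0 < i\<close> \<open>Suc i < n\<close> by arith+
  have "p!(i-1) \<noteq> p!Suc i" using dst[OF lt(1) \<open>Suc i < n\<close>] lt(2) by blast
  then show False using d3[OF a b] by simp
qed



lemma net_X: assumes "is_net VG adj X N A ends" shows "X \<subseteq> VG"
  using assms unfolding is_net_def by (elim conjE) assumption
lemma net_node_sub': assumes "is_net VG adj X N A ends" shows "\<forall>V\<in>N. V \<subseteq> X"
  using assms unfolding is_net_def by (elim conjE) assumption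
lemma net_ends': assumes "is_net VG adj X N A ends" shows "\<forall>E\<in>A. ends E \<subseteq> N \<and> card (ends E) = 2"
  using assms unfolding is_net_def by (elim conjE) assumption
lemma net_conn: assumes "is_net VG adj X N A ends" shows "connected_on (node_adj A ends) N"
  using assms unfolding is_net_def by (elim conjE) assumption
lemma net_disj: assumes "is_net VG adj X N A ends" shows "\<forall>E\<in>A. \<forall>F\<in>A. E \<noteq> F \<longrightarrow> E \<inter> F = {}"
  using assms unfolding is_net_def by (elim conjE) assumption
lemma net_union: assumes "is_net VG adj X N A ends" shows "\<Union>A = X"
  using assms unfolding is_net_def by (elim conjE) assumption
lemma net_lcard: assumes "is_net VG adj X N A ends" shows "card (leaf_nodes N A ends) = 3"
  using assms unfolding is_net_def by (elim conjE) assumption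
lemma net_lf: assumes "is_net VG adj X N A ends" shows "\<forall>V\<in>leaf_nodes N A ends. \<exists>l\<in>leaves VG adj. V = {l}"
  using assms unfolding is_net_def by (elim conjE) assumption
lemma net_N5': assumes "is_net VG adj X N A ends" shows "\<forall>E\<in>A. \<forall>V\<in>N. E \<inter> V \<noteq> {} \<longleftrightarrow> V \<in> ends E"
  using assms unfolding is_net_def by (elim conjE) assumption
lemma net_N6'': assumes "is_net VG adj X N A ends" shows "\<forall>E\<in>A. \<forall>F\<in>A. E \<noteq> F \<longrightarrow> (\<forall>u\<in>E. \<forall>v\<in>F.
        adj u v \<longleftrightarrow> (\<exists>V\<in>N. V \<in> ends E \<and> V \<in> ends F \<and> u \<in> V \<and> v \<in> V))"
  using assms unfolding is_net_def by (elim conjE) assumption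

lemma net_arc_unique: assumes "is_net VG adj X N A ends" "E \<in> A" "F \<in> A" "x \<in> E" "x \<in> F" shows "E = F"
  using net_disj[OF assms(1)] assms(2-5) by blast
lemma net_cover: assumes "is_net VG adj X N A ends" "x \<in> X" shows "\<exists>E\<in>A. x \<in> E"
  using net_union[OF assms(1)] assms(2) by blast
lemma net_N5: assumes "is_net VG adj X N A ends" "E \<in> A" "V \<in> N" "x \<in> E" "x \<in> V" shows "V \<in> ends E"
  using net_N5'[OF assms(1)] assms(2-5) by blast
lemma net_N6: assumes a: "is_net VG adj X N A ends" "E \<in> A" "F \<in> A" "E \<noteq> F" "u \<in> E" "v \<in> F"
   "V \<in> N" "u \<in> V" "v \<in> V" shows "adj u v"
proof -
  have "V \<in> ends E" "V \<in> ends F" using net_N5[OF a(1)] a by blast+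
  then show "adj u v" using net_N6''[OF a(1)] a by blast
qed
lemma net_N6': assumes a: "is_net VG adj X N A ends" "E \<in> A" "F \<in> A" "E \<noteq> F" "u \<in> E" "v \<in> F"
   "adj u v" shows "\<exists>V\<in>N. V \<in> ends E \<and> V \<in> ends F \<and> u \<in> V \<and> v \<in> V"
  using net_N6''[OF a(1)] a(2-7) by blast
lemma net_ends: assumes "is_net VG adj X N A ends" "E \<in> A" shows "card (ends E) = 2 \<and> ends E \<subseteq> N"
  using net_ends'[OF assms(1)] assms(2) by blast
lemma net_node_sub: assumes "is_net VG adj X N A ends" "V \<in> N" shows "V \<subseteq> X"
  using net_node_sub'[OF assms(1)] assms(2) by blast

lemma card2_three: "card S = 2 \<Longrightarrow> a \<in> S \<Longrightarrow> b \<in> S \<Longrightarrow> c \<in> S \<Longrightarrow> a = b \<or> b = c \<or> a = c"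
  by (auto simp: card_2_iff)
lemma card2_eq: "card S = 2 \<Longrightarrow> a \<in> S \<Longrightarrow> b \<in> S \<Longrightarrow> a \<noteq> b \<Longrightarrow> S = {a, b}"
  by (auto simp: card_2_iff)

lemma common_node_unique:
  assumes net: "is_net VG adj X N A ends" and np: "no_parallel_arcs A ends"
    and "E \<in> A" "F \<in> A" "E \<noteq> F" "V \<in> ends E" "V \<in> ends F" "W \<in> ends E" "W \<in> ends F"
  shows "V = W"
proof (rule ccontr)
  assume "V \<noteq> W"
  then have "ends E = {V, W}" "ends F = {V, W}"
    using card2_eq net_ends[OF net] assms by metis+
  then show False using np assms unfolding no_parallel_arcs_def by metis
qed

lemma tamed_pair:
  assumes net: "is_net VG adj X N A ends" and t: "tamed_set N A S"
    and "x \<in> S" "y \<in> S" "E \<in> A" "F \<in> A" "E \<noteq> F" "x \<in> E" "y \<in> F"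
  shows "\<exists>V\<in>N. x \<in> V \<and> y \<in> V \<and> V \<in> ends E \<and> V \<in> ends F"
proof -
  have "(\<exists>G\<in>A. x \<in> G \<and> y \<in> G) \<or> (\<exists>V\<in>N. x \<in> V \<and> y \<in> V)"
    using t assms unfolding tamed_set_def by blast
  moreover have "\<not> (\<exists>G\<in>A. x \<in> G \<and> y \<in> G)"
    using net_arc_unique[OF net] assms by metis
  ultimately obtain V where "V \<in> N" "x \<in> V" "y \<in> V" by blast
  then show ?thesis using net_N5[OF net] assms by blast
qed



lemma part2:
  assumes net: "is_net VG adj X N A ends" and np: "no_parallel_arcs A ends"
    and SX: "S \<subseteq> X" and t: "tamed_set N A S"
  shows "local_set N A ends S"
proof (cases "\<exists>E\<in>A. S \<subseteq> E")
  case True then show ?thesis unfolding local_set_def by blast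
next
  case False
  note cu = common_node_unique[OF net np]
  note tp = tamed_pair[OF net t]
  have "leaf_nodes N A ends \<noteq> {}" using net unfolding is_net_def by auto
  then obtain V where "node_degree A ends V = 1" unfolding leaf_nodes_def by blast
  then have "{E \<in> A. V \<in> ends E} \<noteq> {}" unfolding node_degree_def by (metis card.empty zero_neq_one)
  then have "A \<noteq> {}" by blast
  then have Sne: "S \<noteq> {}" using False by blast
  then obtain x0 where x0: "x0 \<in> S" by blast
  then obtain E where E: "E \<in> A" "x0 \<in> E" using net_cover[OF net] SX by blast
  then obtain y0 where y0: "y0 \<in> S" "y0 \<notin> E" using False by blast
  then obtain F where F: "F \<in> A" "y0 \<in> F" using net_cover[OF net] SX by blast
  have EF: "E \<noteq> F" using E F y0 by blast
  obtain V0 where V0: "V0 \<in> N" "x0 \<in> V0" "y0 \<in> V0" "V0 \<in> ends E" "V0 \<in> ends F"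
    using tp[OF x0 y0(1) E(1) F(1) EF E(2) F(2)] by blast
  show ?thesis
  proof (cases "S \<subseteq> V0")
    case True then show ?thesis using V0 unfolding local_set_def by blast
  next
    case False
    then obtain z where z: "z \<in> S" "z \<notin> V0" by blast
    then obtain G where G: "G \<in> A" "z \<in> G" using net_cover[OF net] SX by blast
    have GE: "G \<noteq> E"
    proof
      assume "G = E"
      then obtain W where "W \<in> N" "z \<in> W" "W \<in> ends E" "W \<in> ends F"
        using tp[OF z(1) y0(1) E(1) F(1) EF _ F(2)] G by blast
      then show False using cu[OF E(1) F(1) EF] V0 z by metis
    qed
    have GF: "G \<noteq> F"
    proof
      assume "G = F"
      then obtain W where "W \<in> N" "z \<in> W" "W \<in> ends E" "W \<in> ends F"
        using tp[OF z(1) x0 F(1) E(1) EF[symmetric] _ E(2)] G by blast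
      then show False using cu[OF E(1) F(1) EF] V0 z by metis
    qed
    obtain W1 where W1: "W1 \<in> N" "z \<in> W1" "x0 \<in> W1" "W1 \<in> ends G" "W1 \<in> ends E"
      using tp[OF z(1) x0 G(1) E(1) GE G(2) E(2)] by blast
    obtain W2 where W2: "W2 \<in> N" "z \<in> W2" "y0 \<in> W2" "W2 \<in> ends G" "W2 \<in> ends F"
      using tp[OF z(1) y0(1) G(1) F(1) GF G(2) F(2)] by blast
    have d1: "W1 \<noteq> V0" "W2 \<noteq> V0" using W1 W2 z by auto
    have d2: "W1 \<noteq> W2"
    proof
      assume "W1 = W2"
      then have "ends E = {V0, W1}" "ends F = {V0, W1}"
        using card2_eq net_ends[OF net] E F V0 W1 W2 d1 by metis+
      then show False using np E F EF unfolding no_parallel_arcs_def by metis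
    qed
    have eE: "ends E = {V0, W1}" using card2_eq net_ends[OF net E(1)] V0 W1 d1 by metis
    have eF: "ends F = {W2, V0}" using card2_eq net_ends[OF net F(1)] V0 W2 d1 by metis
    have eG: "ends G = {W1, W2}" using card2_eq net_ends[OF net G(1)] W1 W2 d2 by metis
    define Tr where "Tr = (V0 \<inter> W1) \<union> (W1 \<inter> W2) \<union> (W2 \<inter> V0)"
    have "triad N A ends Tr"
      unfolding triad_def node_adj_def Tr_def
      using V0(1) W1(1) W2(1) d1 d2 eE eF eG E(1) F(1) G(1) by blast
    moreover have "S \<subseteq> Tr"
    proof
      fix s assume s: "s \<in> S"
      then obtain K where K: "K \<in> A" "s \<in> K" using net_cover[OF net] SX by blast
      consider "K = E" | "K = F" | "K = G" | "K \<noteq> E \<and> K \<noteq> F \<and> K \<noteq> G" by blast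
      then show "s \<in> Tr"
      proof cases
        case 1
        obtain P where P: "s \<in> P" "P \<in> ends E" "P \<in> ends F"
          using tp[OF s y0(1) E(1) F(1) EF _ F(2)] K 1 by blast
        obtain Q where Q: "s \<in> Q" "Q \<in> ends E" "Q \<in> ends G"
          using tp[OF s z(1) E(1) G(1) GE[symmetric] _ G(2)] K 1 by blast
        have "P = V0" using cu[OF E(1) F(1) EF] P V0 by metis
        moreover have "Q = W1" using cu[OF E(1) G(1) GE[symmetric]] Q W1 by metis
        ultimately show ?thesis using P Q Tr_def by blast
      next
        case 2
        obtain P where P: "s \<in> P" "P \<in> ends F" "P \<in> ends E"
          using tp[OF s x0 F(1) E(1) EF[symmetric] _ E(2)] K 2 by blast
        obtain Q where Q: "s \<in> Q" "Q \<in> ends F" "Q \<in> ends G"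
          using tp[OF s z(1) F(1) G(1) GF[symmetric] _ G(2)] K 2 by blast
        have "P = V0" using cu[OF E(1) F(1) EF] P V0 by metis
        moreover have "Q = W2" using cu[OF F(1) G(1) GF[symmetric]] Q W2 by metis
        ultimately show ?thesis using P Q Tr_def by blast
      next
        case 3
        obtain P where P: "s \<in> P" "P \<in> ends G" "P \<in> ends E"
          using tp[OF s x0 G(1) E(1) GE _ E(2)] K 3 by blast
        obtain Q where Q: "s \<in> Q" "Q \<in> ends G" "Q \<in> ends F"
          using tp[OF s y0(1) G(1) F(1) GF _ F(2)] K 3 by blast
        have "P = W1" using cu[OF G(1) E(1) GE] P W1 by metis
        moreover have "Q = W2" using cu[OF G(1) F(1) GF] Q W2 by metis
        ultimately show ?thesis using P Q Tr_def by blast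
      next
        case 4
        obtain P1 where P1: "P1 \<in> ends K" "P1 \<in> ends E"
          using tp[OF s x0 K(1) E(1) _ K(2) E(2)] 4 by blast
        obtain P2 where P2: "P2 \<in> ends K" "P2 \<in> ends F"
          using tp[OF s y0(1) K(1) F(1) _ K(2) F(2)] 4 by blast
        obtain P3 where P3: "P3 \<in> ends K" "P3 \<in> ends G"
          using tp[OF s z(1) K(1) G(1) _ K(2) G(2)] 4 by blast
        have cK: "card (ends K) = 2" using net_ends[OF net K(1)] by blast
        have "ends K = ends E \<or> ends K = ends F \<or> ends K = ends G"
        proof (cases "V0 \<in> ends K")
          case True
          show ?thesis
          proof (cases "W1 \<in> ends K")
            case True
            then show ?thesis using card2_eq[OF cK \<open>V0 \<in> ends K\<close> True] d1 eE by auto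
          next
            case False
            then have "P3 = W2" "P1 = V0" using P3 eG P1 eE by auto
            then show ?thesis using card2_eq[OF cK \<open>V0 \<in> ends K\<close>, of W2] P3 d1 eF by auto
          qed
        next
          case False
          then have "P1 = W1" "P2 = W2" using P1 P2 eE eF by auto
          then show ?thesis using card2_eq[OF cK, of W1 W2] P1 P2 d2 eG by auto
        qed
        then show ?thesis using np K E F G 4 unfolding no_parallel_arcs_def by metis
      qed
    qed
    ultimately show ?thesis unfolding local_set_def by blast
  qed
qed



definition arcrel :: "'a set \<Rightarrow> 'a set set \<Rightarrow> 'a set set \<Rightarrow> 'a set \<Rightarrow> 'a set \<Rightarrow> bool" where
  "arcrel T N A E F \<longleftrightarrow> E \<in> A \<and> F \<in> A \<and> E \<noteq> F \<and>
     (\<exists>V\<in>N. \<exists>t s. t \<in> T \<and> s \<in> T \<and> t \<in> E \<and> s \<in> F \<and> t \<in> V \<and> s \<in> V)"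

lemma sg_sym: "simple_graph VG adj \<Longrightarrow> adj u v \<Longrightarrow> adj v u"
  unfolding simple_graph_def by blast

lemma conn_single: "connected_on R {z}"
  unfolding connected_on_def by auto

lemma conn_insert:
  assumes c: "connected_on R Y" and s: "s \<in> Y" and e: "R s z" "R z s"
  shows "connected_on R (insert z Y)"
  unfolding connected_on_def
proof (intro ballI)
  fix u v assume u: "u \<in> insert z Y" and v: "v \<in> insert z Y"
  let ?r = "{(x, y). x \<in> insert z Y \<and> y \<in> insert z Y \<and> R x y}"
  have mono: "(a, b) \<in> ?r\<^sup>*" if "a \<in> Y" "b \<in> Y" for a b
  proof -
    have "(a, b) \<in> {(x, y). x \<in> Y \<and> y \<in> Y \<and> R x y}\<^sup>*" using c that unfolding connected_on_def by blast
    moreover have "{(x, y). x \<in> Y \<and> y \<in> Y \<and> R x y} \<subseteq> ?r" by blast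
    ultimately show ?thesis using rtrancl_mono by blast
  qed
  have sz: "(s, z) \<in> ?r" "(z, s) \<in> ?r" using s e by auto
  show "(u, v) \<in> ?r\<^sup>*"
  proof (cases "u = z")
    case True
    show ?thesis
    proof (cases "v = z")
      case True then show ?thesis using \<open>u = z\<close> by simp
    next
      case False
      then have "v \<in> Y" using v by simp
      then have "(s, v) \<in> ?r\<^sup>*" using mono s by blast
      then show ?thesis using sz(2) \<open>u = z\<close> by (meson converse_rtrancl_into_rtrancl)
    qed
  next
    case False
    then have uY: "u \<in> Y" using u by simp
    show ?thesis
    proof (cases "v = z")
      case True
      have "(u, s) \<in> ?r\<^sup>*" using mono uY s by blast
      then show ?thesis using sz(1) True by (meson rtrancl_into_rtrancl)
    next
      case False
      then show ?thesis using mono uY v by simp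
    qed
  qed
qed

lemma no_tri:
  assumes sg: "simple_graph VG adj" and net: "is_net VG adj X N A ends"
    and it: "induced_tree VG adj T"
    and arcs: "E \<in> A" "F \<in> A" "F' \<in> A" "E \<noteq> F" "E \<noteq> F'" "F \<noteq> F'" and V: "V \<in> N"
    and t: "t \<in> T" "t \<in> E" "t \<in> V" and s: "s \<in> T" "s \<in> F" "s \<in> V"
    and s': "s' \<in> T" "s' \<in> F'" "s' \<in> V"
  shows False
proof -
  have a1: "adj s s'" using net_N6[OF net arcs(2) arcs(3) arcs(6) s(2) s'(2) V s(3) s'(3)] .
  have a2: "adj s' t" using net_N6[OF net arcs(3) arcs(1) arcs(5)[symmetric] s'(2) t(2) V s'(3) t(3)] .
  have a3: "adj t s" using net_N6[OF net arcs(1) arcs(2) arcs(4) t(2) s(2) V t(3) s(3)] .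
  have d: "s \<noteq> s'" "s' \<noteq> t" "s \<noteq> t"
    using net_arc_unique[OF net] arcs s s' t by metis+
  have TV: "T \<subseteq> VG" using it unfolding induced_tree_def by blast
  have "is_cycle VG adj [s, s', t]"
    unfolding is_cycle_def is_path_def
  proof (intro conjI allI impI)
    fix i assume "Suc i < length [s, s', t]"
    then have "i = 0 \<or> i = 1" by auto
    then show "adj ([s, s', t] ! i) ([s, s', t] ! Suc i)" using a1 a2 by auto
  qed (use d TV s s' t a3 in auto)
  moreover have "set [s, s', t] \<subseteq> T" using s s' t by simp
  ultimately show False using it unfolding induced_tree_def by blast
qed

lemma arc_conn:
  assumes sg: "simple_graph VG adj" and net: "is_net VG adj X N A ends"
    and tame: "taming VG adj X N A" and TV: "T \<subseteq> VG"
    and t0: "t0 \<in> T" "t0 \<in> X" and E0: "E0 \<in> A" "t0 \<in> E0"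
    and path: "(t0, s) \<in> {(x, y). x \<in> T \<and> y \<in> T \<and> adj x y}\<^sup>*"
  shows "(s \<in> X \<longrightarrow> (\<forall>E\<in>A. s \<in> E \<longrightarrow> (E0, E) \<in> {(E, F). arcrel T N A E F}\<^sup>*)) \<and>
         (s \<notin> X \<longrightarrow> (\<exists>Y a y. Y \<subseteq> T - X \<and> connected_on adj Y \<and> s \<in> Y \<and> a \<in> T \<and> a \<in> X \<and>
             y \<in> Y \<and> adj a y \<and> (\<forall>E\<in>A. a \<in> E \<longrightarrow> (E0, E) \<in> {(E, F). arcrel T N A E F}\<^sup>*)))"
  using path
proof (induction rule: rtrancl_induct)
  case base
  show ?case using t0 E0 net_arc_unique[OF net] by blast
next
  case (step y z)
  let ?R = "{(E, F). arcrel T N A E F}"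
  have yz: "y \<in> T" "z \<in> T" "adj y z" using step(2) by auto
  have zy: "adj z y" using sg_sym[OF sg yz(3)] .
  show ?case
  proof (cases "y \<in> X")
    case yX: True
    obtain Ey where Ey: "Ey \<in> A" "y \<in> Ey" using net_cover[OF net yX] by blast
    have IH: "(E0, Ey) \<in> ?R\<^sup>*" using step(3) yX Ey by blast
    show ?thesis
    proof (cases "z \<in> X")
      case True
      have "(E0, E) \<in> ?R\<^sup>*" if E: "E \<in> A" "z \<in> E" for E
      proof (cases "E = Ey")
        case True then show ?thesis using IH by simp
      next
        case False
        obtain V where "V \<in> N" "y \<in> V" "z \<in> V"
          using net_N6'[OF net Ey(1) E(1) False[symmetric] Ey(2) E(2) yz(3)] by blast
        then have "arcrel T N A Ey E" unfolding arcrel_def using Ey E False yz by blast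
        then show ?thesis using IH by (simp add: rtrancl_into_rtrancl)
      qed
      then show ?thesis using True by blast
    next
      case False
      have "{z} \<subseteq> T - X" using yz False by blast
      moreover have "\<forall>E\<in>A. y \<in> E \<longrightarrow> (E0, E) \<in> ?R\<^sup>*" using step(3) yX by blast
      ultimately show ?thesis using False conn_single[of adj z] yz yX by blast
    qed
  next
    case yX: False
    then obtain Y a w where Y: "Y \<subseteq> T - X" "connected_on adj Y" "y \<in> Y" "a \<in> T" "a \<in> X"
      "w \<in> Y" "adj a w" "\<forall>E\<in>A. a \<in> E \<longrightarrow> (E0, E) \<in> ?R\<^sup>*" using step(3) by blast
    show ?thesis
    proof (cases "z \<in> X")
      case zX: True
      have "tamed_outside adj X N A Y" using tame Y(1,2) TV unfolding taming_def by blast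
      then have tm: "tamed_set N A {x \<in> X. \<exists>y\<in>Y. adj x y}" unfolding tamed_outside_def .
      have "a \<in> {x \<in> X. \<exists>y\<in>Y. adj x y}" using Y by blast
      moreover have "z \<in> {x \<in> X. \<exists>y\<in>Y. adj x y}" using zX zy Y(3) by blast
      ultimately have "(\<exists>G\<in>A. a \<in> G \<and> z \<in> G) \<or> (\<exists>V\<in>N. a \<in> V \<and> z \<in> V)"
        using tm unfolding tamed_set_def by blast
      obtain Ea where Ea: "Ea \<in> A" "a \<in> Ea" using net_cover[OF net Y(5)] by blast
      have IH: "(E0, Ea) \<in> ?R\<^sup>*" using Y(8) Ea by blast
      have "(E0, E) \<in> ?R\<^sup>*" if E: "E \<in> A" "z \<in> E" for E
      proof (cases "E = Ea")
        case True then show ?thesis using IH by simp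
      next
        case False
        have "\<not> (\<exists>G\<in>A. a \<in> G \<and> z \<in> G)"
          using net_arc_unique[OF net] Ea E False by metis
        then obtain V where "V \<in> N" "a \<in> V" "z \<in> V"
          using \<open>(\<exists>G\<in>A. a \<in> G \<and> z \<in> G) \<or> (\<exists>V\<in>N. a \<in> V \<and> z \<in> V)\<close> by blast
        then have "arcrel T N A Ea E" unfolding arcrel_def using Ea E False yz Y(4) by blast
        then show ?thesis using IH by (simp add: rtrancl_into_rtrancl)
      qed
      then show ?thesis using zX by blast
    next
      case zX: False
      have "insert z Y \<subseteq> T - X" using Y(1) yz zX by blast
      moreover have "connected_on adj (insert z Y)" using conn_insert[OF Y(2) Y(3) yz(3) zy] .
      ultimately show ?thesis using zX Y by blast
    qed
  qed
qed



lemma arcrel_sym: "arcrel T N A E F \<Longrightarrow> arcrel T N A F E"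
  unfolding arcrel_def by blast

lemma arcrel_node:
  assumes net: "is_net VG adj X N A ends" and r: "arcrel T N A E F"
  obtains V t s where "V \<in> N" "V \<in> ends E" "V \<in> ends F" "t \<in> T" "t \<in> E" "t \<in> V" "s \<in> T" "s \<in> F" "s \<in> V"
    "E \<in> A" "F \<in> A" "E \<noteq> F"
proof -
  from r obtain V t s where *: "E \<in> A" "F \<in> A" "E \<noteq> F" "V \<in> N" "t \<in> T" "s \<in> T" "t \<in> E" "s \<in> F" "t \<in> V" "s \<in> V"
    unfolding arcrel_def by blast
  then have "V \<in> ends E" "V \<in> ends F" using net_N5[OF net] by blast+
  then show ?thesis using * that by blast
qed

lemma arcrel_deg2:
  assumes sg: "simple_graph VG adj" and net: "is_net VG adj X N A ends"
    and it: "induced_tree VG adj T"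
    and ra: "arcrel T N A E a" and rb: "arcrel T N A E b" and rc: "arcrel T N A E c"
  shows "a = b \<or> b = c \<or> a = c"
proof -
  obtain Va ta sa where a: "Va \<in> N" "Va \<in> ends E" "ta \<in> T" "ta \<in> E" "ta \<in> Va" "sa \<in> T" "sa \<in> a" "sa \<in> Va" "E \<in> A" "a \<in> A" "E \<noteq> a"
    using arcrel_node[OF net ra] by metis
  obtain Vb tb sb where b: "Vb \<in> N" "Vb \<in> ends E" "tb \<in> T" "tb \<in> E" "tb \<in> Vb" "sb \<in> T" "sb \<in> b" "sb \<in> Vb" "b \<in> A" "E \<noteq> b"
    using arcrel_node[OF net rb] by metis
  obtain Vc tc sc where c: "Vc \<in> N" "Vc \<in> ends E" "tc \<in> T" "tc \<in> E" "tc \<in> Vc" "sc \<in> T" "sc \<in> c" "sc \<in> Vc" "c \<in> A" "E \<noteq> c"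
    using arcrel_node[OF net rc] by metis
  have "card (ends E) = 2" using net_ends[OF net a(9)] by blast
  then have "Va = Vb \<or> Vb = Vc \<or> Va = Vc" using card2_three a(2) b(2) c(2) by metis
  then show ?thesis
  proof (elim disjE)
    assume "Va = Vb"
    show ?thesis
    proof (rule ccontr)
      assume "\<not> ?thesis"
      then have "a \<noteq> b" by blast
      show False using no_tri[OF sg net it a(9) a(10) b(9) a(11) b(10) \<open>a \<noteq> b\<close> a(1) a(3,4,5) a(6,7,8)]
        b(6,7,8) \<open>Va = Vb\<close> by blast
    qed
  next
    assume "Vb = Vc"
    show ?thesis
    proof (rule ccontr)
      assume "\<not> ?thesis"
      then have "b \<noteq> c" by blast
      show False using no_tri[OF sg net it a(9) b(9) c(9) b(10) c(10) \<open>b \<noteq> c\<close> b(1) b(3,4,5) b(6,7,8)]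
        c(6,7,8) \<open>Vb = Vc\<close> by blast
    qed
  next
    assume "Va = Vc"
    show ?thesis
    proof (rule ccontr)
      assume "\<not> ?thesis"
      then have "a \<noteq> c" by blast
      show False using no_tri[OF sg net it a(9) a(10) c(9) a(11) c(10) \<open>a \<noteq> c\<close> a(1) a(3,4,5) a(6,7,8)]
        c(6,7,8) \<open>Va = Vc\<close> by blast
    qed
  qed
qed

lemma arcrel_leaf_deg1:
  assumes sg: "simple_graph VG adj" and net: "is_net VG adj X N A ends"
    and it: "induced_tree VG adj T"
    and L: "{l} \<in> N" "{l} \<in> ends E" "l \<in> E" "E \<in> A"
    and ra: "arcrel T N A E a" and rb: "arcrel T N A E b"
  shows "a = b"
proof (rule ccontr)
  assume ab: "a \<noteq> b"
  obtain Va ta sa where a: "Va \<in> N" "Va \<in> ends E" "ta \<in> T" "ta \<in> E" "ta \<in> Va" "sa \<in> T" "sa \<in> a" "sa \<in> Va" "E \<in> A" "a \<in> A" "E \<noteq> a"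
    using arcrel_node[OF net ra] by metis
  obtain Vb tb sb where b: "Vb \<in> N" "Vb \<in> ends E" "tb \<in> T" "tb \<in> E" "tb \<in> Vb" "sb \<in> T" "sb \<in> b" "sb \<in> Vb" "b \<in> A" "E \<noteq> b"
    using arcrel_node[OF net rb] by metis
  have "Va \<noteq> {l}" using a L net_arc_unique[OF net] by blast
  moreover have "Vb \<noteq> {l}" using b L net_arc_unique[OF net] by blast
  moreover have "card (ends E) = 2" using net_ends[OF net a(9)] by blast
  ultimately have "Va = Vb" using card2_three a(2) b(2) L(2) by metis
  then show False using no_tri[OF sg net it a(9) a(10) b(9) a(11) b(10) ab a(1) a(3,4,5) a(6,7,8)]
        b(6,7,8) by blast
qed

lemma leaf_data:
  assumes net: "is_net VG adj X N A ends" and V: "V \<in> leaf_nodes N A ends"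
  shows "\<exists>E l. V \<in> N \<and> {E' \<in> A. V \<in> ends E'} = {E} \<and> E \<in> A \<and> V = {l} \<and> l \<in> leaves VG adj \<and>
     l \<in> X \<and> l \<in> E \<and> V \<in> ends E"
proof -
  have VN: "V \<in> N" and "card {E' \<in> A. V \<in> ends E'} = 1"
    using V unfolding leaf_nodes_def node_degree_def by auto
  then obtain E where E: "{E' \<in> A. V \<in> ends E'} = {E}" by (auto simp: card_1_singleton_iff)
  obtain l where l: "l \<in> leaves VG adj" "V = {l}" using net_lf[OF net] V by blast
  have lX: "l \<in> X" using net_node_sub[OF net VN] l by blast
  obtain E' where E': "E' \<in> A" "l \<in> E'" using net_cover[OF net lX] by blast
  have "V \<in> ends E'" using net_N5[OF net E'(1) VN E'(2)] l by blast
  then have "E' = E" using E E' by blast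
  then show ?thesis using E E' VN l lX \<open>V \<in> ends E'\<close> by blast
qed

lemma same_arc_leaves:
  assumes net: "is_net VG adj X N A ends"
    and N: "Vi \<in> N" "Vj \<in> N" "Vk \<in> N" "Vi \<noteq> Vj" "Vk \<noteq> Vi" "Vk \<noteq> Vj"
    and Ei: "{E' \<in> A. Vi \<in> ends E'} = {E}" and Ej: "{E' \<in> A. Vj \<in> ends E'} = {E}"
  shows False
proof -
  have EA: "E \<in> A" "Vi \<in> ends E" "Vj \<in> ends E" using Ei Ej by blast+
  have eE: "ends E = {Vi, Vj}" using card2_eq net_ends[OF net EA(1)] EA N(4) by metis
  have "(Vi, Vk) \<in> {(x, y). x \<in> N \<and> y \<in> N \<and> node_adj A ends x y}\<^sup>*"
    using net_conn[OF net] N unfolding connected_on_def by blast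
  then have "Vk \<in> {Vi, Vj}"
  proof (induction rule: rtrancl_induct)
    case base then show ?case by simp
  next
    case (step y z)
    then obtain F where F: "F \<in> A" "ends F = {y, z}" unfolding node_adj_def by blast
    have "F = E" using F step(3) Ei Ej by blast
    then show ?case using F eE by blast
  qed
  then show False using N by blast
qed

lemma part1:
  assumes sg: "simple_graph VG adj" and net: "is_net VG adj X N A ends"
    and tame: "taming VG adj X N A" and sap: "sapling VG adj T"
  shows False
proof -
  have it: "induced_tree VG adj T" and LT: "leaves VG adj \<subseteq> T" using sap unfolding sapling_def by blast+
  have TV: "T \<subseteq> VG" and Tc: "connected_on adj T" using it unfolding induced_tree_def by blast+
  obtain V1 V2 V3 where LN: "leaf_nodes N A ends = {V1, V2, V3}" "V1 \<noteq> V2" "V2 \<noteq> V3" "V1 \<noteq> V3"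
    using net_lcard[OF net] by (auto simp: card_3_iff)
  obtain E1 l1 where d1: "V1 \<in> N" "{E' \<in> A. V1 \<in> ends E'} = {E1}" "E1 \<in> A" "V1 = {l1}"
    "l1 \<in> leaves VG adj" "l1 \<in> X" "l1 \<in> E1" "V1 \<in> ends E1"
    using leaf_data[OF net, of V1] LN by blast
  obtain E2 l2 where d2: "V2 \<in> N" "{E' \<in> A. V2 \<in> ends E'} = {E2}" "E2 \<in> A" "V2 = {l2}"
    "l2 \<in> leaves VG adj" "l2 \<in> X" "l2 \<in> E2" "V2 \<in> ends E2"
    using leaf_data[OF net, of V2] LN by blast
  obtain E3 l3 where d3: "V3 \<in> N" "{E' \<in> A. V3 \<in> ends E'} = {E3}" "E3 \<in> A" "V3 = {l3}"
    "l3 \<in> leaves VG adj" "l3 \<in> X" "l3 \<in> E3" "V3 \<in> ends E3"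
    using leaf_data[OF net, of V3] LN by blast
  have E12: "E1 \<noteq> E2"
  proof
    assume "E1 = E2" then show False
      using same_arc_leaves[OF net d1(1) d2(1) d3(1) LN(2)] LN d1(2) d2(2) by metis
  qed
  have E13: "E1 \<noteq> E3"
  proof
    assume "E1 = E3" then show False
      using same_arc_leaves[OF net d1(1) d3(1) d2(1) LN(4)] LN d1(2) d3(2) by metis
  qed
  have E23: "E2 \<noteq> E3"
  proof
    assume "E2 = E3" then show False
      using same_arc_leaves[OF net d2(1) d3(1) d1(1) LN(3)] LN d2(2) d3(2) by metis
  qed
  have l1T: "l1 \<in> T" "l2 \<in> T" "l3 \<in> T" using LT d1 d2 d3 by blast+
  have c2: "(E1, E2) \<in> {(a, b). arcrel T N A a b}\<^sup>*"
  proof -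
    have "(l1, l2) \<in> {(x, y). x \<in> T \<and> y \<in> T \<and> adj x y}\<^sup>*" using Tc l1T unfolding connected_on_def by blast
    then show ?thesis using arc_conn[OF sg net tame TV l1T(1) d1(6) d1(3) d1(7)] d2 by blast
  qed
  have c3: "(E1, E3) \<in> {(a, b). arcrel T N A a b}\<^sup>*"
  proof -
    have "(l1, l3) \<in> {(x, y). x \<in> T \<and> y \<in> T \<and> adj x y}\<^sup>*" using Tc l1T unfolding connected_on_def by blast
    then show ?thesis using arc_conn[OF sg net tame TV l1T(1) d1(6) d1(3) d1(7)] d3 by blast
  qed
  show False
  proof (rule deg2_no_three_ends[of "arcrel T N A" E1 E2 E3])
    show "\<And>u v. arcrel T N A u v \<Longrightarrow> arcrel T N A v u" by (rule arcrel_sym)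
    show "\<And>v a b c. arcrel T N A v a \<Longrightarrow> arcrel T N A v b \<Longrightarrow> arcrel T N A v c \<Longrightarrow> a = b \<or> b = c \<or> a = c"
      using arcrel_deg2[OF sg net it] by blast
    show "\<And>a b. arcrel T N A E1 a \<Longrightarrow> arcrel T N A E1 b \<Longrightarrow> a = b"
      using arcrel_leaf_deg1[OF sg net it] d1 by blast
    show "\<And>a b. arcrel T N A E2 a \<Longrightarrow> arcrel T N A E2 b \<Longrightarrow> a = b"
      using arcrel_leaf_deg1[OF sg net it] d2 by blast
    show "\<And>a b. arcrel T N A E3 a \<Longrightarrow> arcrel T N A E3 b \<Longrightarrow> a = b"
      using arcrel_leaf_deg1[OF sg net it] d3 by blast
  qed (use E12 E13 E23 c2 c3 in auto)
qed

theorem lemma3p5: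
  fixes VG :: "'a set" and adj :: "'a \<Rightarrow> 'a \<Rightarrow> bool"
  assumes "simple_graph VG adj"
    and "card (leaves VG adj) = 3"
  shows "((\<exists>X N A ends. is_net VG adj X N A ends \<and> taming VG adj X N A)
            \<longrightarrow> \<not> (\<exists>T. sapling VG adj T))
       \<and> (\<forall>X N A ends S. is_net VG adj X N A ends \<and> no_parallel_arcs A ends \<and>
            S \<subseteq> X \<and> tamed_set N A S \<longrightarrow> local_set N A ends S)"
  using part1[OF assms(1)] part2 by blast


end
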